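(* Assume the setting in the context. (a) Assume Conditions (MM), (GG), (JS-cts) and (JD-jump). Suppose that for every $f\in\mathcal{D}_{\mathcal{X}}$ there exist $u_+\in\mathcal{X}^{\mathcal{U}}$ and $u_-\in\mathcal{X}^{\mathcal{V}}$ with $(\widehat Lu_+)|_{\mathcal{U}}=(\widehat Lu_-)|_{\mathcal{V}}=0$ and $\widetilde{\operatorname{Tr}}^{\mathcal{U}}_{\mathcal{X}}u_+=\widetilde{\operatorname{Tr}}^{\mathcal{V}}_{\mathcal{X}}u_-=f$. Then $\widetilde{\operatorname{Tr}}^{\mathcal{U}}_{\mathcal{X}}\widehat{\mathbf{S}}^L_{\mathcal{U}}:\mathcal{N}_{\mathcal{X}}\to\mathcal{D}_{\mathcal{X}}$ is onto. If moreover there is $C_0<\infty$ such that for every $f\in\mathcal{D}_{\mathcal{X}}$ such a pair can be chosen with $\|u_+\|_{\mathcal{X}^{\mathcal{U}}}\le C_0\|f\|_{\mathcal{D}_{\mathcal{X}}}$ and $\|u_-\|_{\mathcal{X}^{\mathcal{V}}}\le C_0\|f\|_{\mathcal{D}_{\mathcal{X}}}$, then there is $C_1$ such that every $f\in\mathcal{D}_{\mathcal{X}}$ equals $\widetilde{\operatorname{Tr}}^{\mathcal{U}}_{\mathcal{X}}\widehat{\mathbf{S}}^L_{\mathcal{U}}g$ for some $g\in\mathcal{N}_{\mathcal{X}}$ with $\|g\|_{\mathcal{N}_{\mathcal{X}}}\le C_1\|f\|_{\mathcal{D}_{\mathcal{X}}}$. (b) Assume Conditions (TT), (GG), (JD-cts)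 and (JS-jump). Suppose that for every $g\in\mathcal{N}_{\mathcal{X}}$ there exist $u_+\in\mathcal{X}^{\mathcal{U}}$ and $u_-\in\mathcal{X}^{\mathcal{V}}$ with $(\widehat Lu_+)|_{\mathcal{U}}=(\widehat Lu_-)|_{\mathcal{V}}=0$ and $\widehat{\mathbf{M}}^{\mathcal{U}}_Bu_+=\widehat{\mathbf{M}}^{\mathcal{V}}_Bu_-=g$. Then $\widehat{\mathbf{M}}^{\mathcal{U}}_B\widehat{\mathbf{D}}^B_{\mathcal{U}}:\mathcal{D}_{\mathcal{X}}\to\mathcal{N}_{\mathcal{X}}$ is onto. If moreover there is $C_0<\infty$ such that for every $g\in\mathcal{N}_{\mathcal{X}}$ such a pair can be chosen with $\|u_+\|_{\mathcal{X}^{\mathcal{U}}}\le C_0\|g\|_{\mathcal{N}_{\mathcal{X}}}$ and $\|u_-\|_{\mathcal{X}^{\mathcal{V}}}\le C_0\|g\|_{\mathcal{N}_{\mathcal{X}}}$, then there is $C_1$ such that every $g\in\mathcal{N}_{\mathcal{X}}$ equals $\widehat{\mathbf{M}}^{\mathcal{U}}_B\widehat{\mathbf{D}}^B_{\mathcal{U}}f$ for some $f\in\mathcal{D}_{\mathcal{X}}$ with $\|f\|_{\mathcal{D}_{\mathcal{X}}}\le C_1\|g\|_{\mathcal{N}_{\mathcal{X}}}$.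
   Context: Let $\mathcal{X}^{\mathcal{U}}$, $\mathcal{X}^{\mathcal{V}}$, $\mathcal{D}_{\mathcal{X}}$, $\mathcal{N}_{\mathcal{X}}$ be quasi-Banach spaces. For $\mathcal{O}\in\{\mathcal{U},\mathcal{V}\}$: let $u\mapsto(\widehat Lu)|_{\mathcal{O}}$ be a linear operator on $\mathcal{X}^{\mathcal{O}}$, let $\mathcal{K}^{\mathcal{O}}=\{u\in\mathcal{X}^{\mathcal{O}}:(\widehat Lu)|_{\mathcal{O}}=0\}$, and let $\widetilde{\operatorname{Tr}}^{\mathcal{O}}_{\mathcal{X}}:\mathcal{K}^{\mathcal{O}}\to\mathcal{D}_{\mathcal{X}}$, $\widehat{\mathbf{M}}^{\mathcal{O}}_B:\mathcal{K}^{\mathcal{O}}\to\mathcal{N}_{\mathcal{X}}$, $\widehat{\mathbf{D}}^B_{\mathcal{O}}:\mathcal{D}_{\mathcal{X}}\to\mathcal{X}^{\mathcal{O}}$, $\widehat{\mathbf{S}}^L_{\mathcal{O}}:\mathcal{N}_{\mathcal{X}}\to\mathcal{X}^{\mathcal{O}}$ be linear operators. For $\mathcal{O}\in\{\mathcal U,\mathcal V\}$ consider: (T)$_{\mathcal{O}}$ $\widetilde{\operatorname{Tr}}^{\mathcal{O}}_{\mathcal{X}}$ is bounded $\mathcal{K}^{\mathcal{O}}\to\mathcal{D}_{\mathcal{X}}$; (M)$_{\mathcal{O}}$ $\widehat{\mathbf{M}}^{\mathcal{O}}_B$ is bounded $\mathcal{K}^{\mathcal{O}}\to\mathcal{N}_{\mathcal{X}}$;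 (G)$_{\mathcal{O}}$ every $u\in\mathcal{K}^{\mathcal{O}}$ satisfies $u=-\widehat{\mathbf{D}}^B_{\mathcal{O}}(\widetilde{\operatorname{Tr}}^{\mathcal{O}}_{\mathcal{X}}u)+\widehat{\mathbf{S}}^L_{\mathcal{O}}(\widehat{\mathbf{M}}^{\mathcal{O}}_Bu)$. Condition (TT) means (T)$_{\mathcal U}$ and (T)$_{\mathcal V}$ both hold; likewise (MM), (GG). Further conditions (each including that the potentials involved lie in the respective $\mathcal K^{\mathcal O}$, so the expressions are defined): (JS-cts) $\widetilde{\operatorname{Tr}}^{\mathcal{U}}_{\mathcal{X}}(\widehat{\mathbf{S}}^L_{\mathcal{U}}g)-\widetilde{\operatorname{Tr}}^{\mathcal{V}}_{\mathcal{X}}(\widehat{\mathbf{S}}^L_{\mathcal{V}}g)=0$ for all $g\in\mathcal{N}_{\mathcal{X}}$; (JD-cts) $\widehat{\mathbf{M}}^{\mathcal{U}}_B(\widehat{\mathbf{D}}^B_{\mathcal{U}}f)-\widehat{\mathbf{M}}^{\mathcal{V}}_B(\widehat{\mathbf{D}}^B_{\mathcal{V}}f)=0$ for all $f\in\mathcal{D}_{\mathcal{X}}$; (JS-jump) $\widehat{\mathbf{M}}^{\mathcal{U}}_B(\widehat{\mathbf{S}}^L_{\mathcal{U}}g)+\widehat{\mathbf{M}}^{\mathcal{V}}_B(\widehat{\mathbf{S}}^L_{\mathcal{V}}g)=g$ for all $g\in\mathcal{N}_{\mathcal{X}}$; (JD-jump) $\widetilde{\operatorname{Tr}}^{\mathcal{U}}_{\mathcal{X}}(\widehat{\mathbf{D}}^B_{\mathcal{U}}f)+\widetilde{\operatorname{Tr}}^{\mathcal{V}}_{\mathcal{X}}(\widehat{\mathbf{D}}^B_{\mathcal{V}}f)=-f$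 for all $f\in\mathcal{D}_{\mathcal{X}}$. *)

theory Defs
  imports Complex_Main
begin

definition quasi_norm :: "('a::real_vector \<Rightarrow> real) \<Rightarrow> bool" where
  "quasi_norm N \<longleftrightarrow>
     (\<forall>x. 0 \<le> N x) \<and> (\<forall>x. N x = 0 \<longleftrightarrow> x = 0) \<and>
     (\<forall>c x. N (c *\<^sub>R x) = \<bar>c\<bar> * N x) \<and>
     (\<exists>K\<ge>1. \<forall>x y. N (x + y) \<le> K * (N x + N y))"

definition quasi_banach :: "('a::real_vector \<Rightarrow> real) \<Rightarrow> bool" where
  "quasi_banach N \<longleftrightarrow> quasi_norm N \<and>
     (\<forall>s::nat \<Rightarrow> 'a. (\<forall>e>0. \<exists>M. \<forall>m\<ge>M. \<forall>n\<ge>M. N (s m - s n) < e)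
         \<longrightarrow> (\<exists>l. (\<lambda>n. N (s n - l)) \<longlonglongrightarrow> 0))"

definition lin_on_set :: "'a::real_vector set \<Rightarrow> ('a \<Rightarrow> 'b::real_vector) \<Rightarrow> bool" where
  "lin_on_set K f \<longleftrightarrow> (\<forall>x\<in>K. \<forall>y\<in>K. f (x + y) = f x + f y) \<and>
                       (\<forall>c. \<forall>x\<in>K. f (c *\<^sub>R x) = c *\<^sub>R f x)"

definition bounded_on_set ::
  "('a \<Rightarrow> real) \<Rightarrow> ('b \<Rightarrow> real) \<Rightarrow> 'a set \<Rightarrow> ('a \<Rightarrow> 'b) \<Rightarrow> bool" where
  "bounded_on_set Na Nb K T \<longleftrightarrow> (\<exists>C. \<forall>x\<in>K. Nb (T x) \<le> C * Na x)"

end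

theory Submission
  imports Defs
begin

theorem theorem6p4:
  fixes nU :: "'xu::real_vector \<Rightarrow> real" and nV :: "'xv::real_vector \<Rightarrow> real"
    and nD :: "'d::real_vector \<Rightarrow> real" and nN :: "'n::real_vector \<Rightarrow> real"
    and LU :: "'xu \<Rightarrow> 'yu::real_vector" and LV :: "'xv \<Rightarrow> 'yv::real_vector"
    and TrU :: "'xu \<Rightarrow> 'd" and TrV :: "'xv \<Rightarrow> 'd"
    and MU :: "'xu \<Rightarrow> 'n" and MV :: "'xv \<Rightarrow> 'n"
    and DU :: "'d \<Rightarrow> 'xu" and DV :: "'d \<Rightarrow> 'xv"
    and SU :: "'n \<Rightarrow> 'xu" and SV :: "'n \<Rightarrow> 'xv"
  defines "KU \<equiv> {u. LU u = 0}" and "KV \<equiv> {u. LV u = 0}"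
  assumes qbU: "quasi_banach nU" and qbV: "quasi_banach nV"
    and qbD: "quasi_banach nD" and qbN: "quasi_banach nN"
    and linLU: "linear LU" and linLV: "linear LV"
    and linTrU: "lin_on_set KU TrU" and linTrV: "lin_on_set KV TrV"
    and linMU: "lin_on_set KU MU" and linMV: "lin_on_set KV MV"
    and linDU: "linear DU" and linDV: "linear DV"
    and linSU: "linear SU" and linSV: "linear SV"
  shows
  "((bounded_on_set nU nN KU MU \<and> bounded_on_set nV nN KV MV)
     \<and> (\<forall>u\<in>KU. u = - DU (TrU u) + SU (MU u)) \<and> (\<forall>u\<in>KV. u = - DV (TrV u) + SV (MV u))
     \<and> (\<forall>g. SU g \<in> KU \<and> SV g \<in> KV \<and> TrU (SU g) - TrV (SV g) = 0)
     \<and> (\<forall>f. DU f \<in> KU \<and> DV f \<in> KV \<and> TrU (DU f) + TrV (DV f) = - f)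
     \<and> (\<forall>f. \<exists>up um. LU up = 0 \<and> LV um = 0 \<and> TrU up = f \<and> TrV um = f)
   \<longrightarrow> (\<forall>f. \<exists>g. TrU (SU g) = f)
       \<and> ((\<exists>C0. \<forall>f. \<exists>up um. LU up = 0 \<and> LV um = 0 \<and> TrU up = f \<and> TrV um = f
                      \<and> nU up \<le> C0 * nD f \<and> nV um \<le> C0 * nD f)
          \<longrightarrow> (\<exists>C1. \<forall>f. \<exists>g. f = TrU (SU g) \<and> nN g \<le> C1 * nD f)))
   \<and>
   ((bounded_on_set nU nD KU TrU \<and> bounded_on_set nV nD KV TrV)
     \<and> (\<forall>u\<in>KU. u = - DU (TrU u) + SU (MU u)) \<and> (\<forall>u\<in>KV. u = - DV (TrV u) + SV (MV u))
     \<and> (\<forall>f. DU f \<in> KU \<and> DV f \<in> KV \<and> MU (DU f) - MV (DV f) = 0)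
     \<and> (\<forall>g. SU g \<in> KU \<and> SV g \<in> KV \<and> MU (SU g) + MV (SV g) = g)
     \<and> (\<forall>g. \<exists>up um. LU up = 0 \<and> LV um = 0 \<and> MU up = g \<and> MV um = g)
   \<longrightarrow> (\<forall>g. \<exists>f. MU (DU f) = g)
       \<and> ((\<exists>C0. \<forall>g. \<exists>up um. LU up = 0 \<and> LV um = 0 \<and> MU up = g \<and> MV um = g
                      \<and> nU up \<le> C0 * nN g \<and> nV um \<le> C0 * nN g)
          \<longrightarrow> (\<exists>C1. \<forall>g. \<exists>f. g = MU (DU f) \<and> nD f \<le> C1 * nN g)))"
  proof -
  have KU_add: "x + y \<in> KU" if "x \<in> KU" "y \<in> KU" for x y
    using that linLU unfolding KU_def by (simp add: linear_add)
  have KV_add: "x + y \<in> KV" if "x \<in> KV" "y \<in> KV" for x y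
    using that linLV unfolding KV_def by (simp add: linear_add)
  have KU_neg: "- x \<in> KU" if "x \<in> KU" for x
    using that linLU unfolding KU_def by (simp add: linear_neg)
  have KV_neg: "- x \<in> KV" if "x \<in> KV" for x
    using that linLV unfolding KV_def by (simp add: linear_neg)
  have negl: "T (- x) = - T x" if "lin_on_set K T" "x \<in> K"
    for K and T :: "'a::real_vector \<Rightarrow> 'b::real_vector" and x
  proof -
    have "T ((-1) *\<^sub>R x) = (-1) *\<^sub>R T x" using that unfolding lin_on_set_def by blast
    then show ?thesis by simp
  qed
  have addl: "T (x + y) = T x + T y" if "lin_on_set K T" "x \<in> K" "y \<in> K"
    for K and T :: "'a::real_vector \<Rightarrow> 'b::real_vector" and x y
    using that unfolding lin_on_set_def by blast
  obtain KD where KD: "KD \<ge> 1" "\<And>x y. nD (x + y) \<le> KD * (nD x + nD y)"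
    using qbD unfolding quasi_banach_def quasi_norm_def by blast
  obtain KN where KN: "KN \<ge> 1" "\<And>x y. nN (x + y) \<le> KN * (nN x + nN y)"
    using qbN unfolding quasi_banach_def quasi_norm_def by blast
  have nDneg: "nD (- x) = nD x" for x
  proof -
    have "nD ((-1) *\<^sub>R x) = \<bar>-1\<bar> * nD x" using qbD unfolding quasi_banach_def quasi_norm_def by blast
    then show ?thesis by simp
  qed
  have nUpos: "nU x \<ge> 0" for x using qbU unfolding quasi_banach_def quasi_norm_def by blast
  have nVpos: "nV x \<ge> 0" for x using qbV unfolding quasi_banach_def quasi_norm_def by blast
  have nNpos: "nN x \<ge> 0" for x using qbN unfolding quasi_banach_def quasi_norm_def by blast
  have nDpos: "nD x \<ge> 0" for x using qbD unfolding quasi_banach_def quasi_norm_def by blast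
  have keyA: "TrU (SU (MU up + MV um)) = f"
    if G: "(\<forall>u\<in>KU. u = - DU (TrU u) + SU (MU u))" "(\<forall>u\<in>KV. u = - DV (TrV u) + SV (MV u))"
     and JS: "(\<forall>g. SU g \<in> KU \<and> SV g \<in> KV \<and> TrU (SU g) - TrV (SV g) = 0)"
     and JD: "(\<forall>f. DU f \<in> KU \<and> DV f \<in> KV \<and> TrU (DU f) + TrV (DV f) = - f)"
     and P: "LU up = 0" "LV um = 0" "TrU up = f" "TrV um = f" for up um f
  proof -
    have upK: "up \<in> KU" and umK: "um \<in> KV" using P unfolding KU_def KV_def by auto
    have e1: "f = - TrU (DU f) + TrU (SU (MU up))"
    proof -
      have "TrU up = TrU (- DU (TrU up) + SU (MU up))" using G(1) upK by metis
      also have "\<dots> = - TrU (DU f) + TrU (SU (MU up))"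
        using addl[OF linTrU KU_neg[OF conjunct1[OF JD[rule_format]]] conjunct1[OF JS[rule_format]]]
          negl[OF linTrU conjunct1[OF JD[rule_format]]] P(3) by simp
      finally show ?thesis using P(3) by simp
    qed
    have e2: "f = - TrV (DV f) + TrV (SV (MV um))"
    proof -
      have "TrV um = TrV (- DV (TrV um) + SV (MV um))" using G(2) umK by metis
      also have "\<dots> = - TrV (DV f) + TrV (SV (MV um))"
        using addl[OF linTrV KV_neg[OF conjunct1[OF conjunct2[OF JD[rule_format]]]] conjunct1[OF conjunct2[OF JS[rule_format]]]]
          negl[OF linTrV conjunct1[OF conjunct2[OF JD[rule_format]]]] P(4) by simp
      finally show ?thesis using P(4) by simp
    qed
    have "TrU (SU (MU up + MV um)) = TrU (SU (MU up)) + TrU (SU (MV um))"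
      using addl[OF linTrU conjunct1[OF JS[rule_format]] conjunct1[OF JS[rule_format]]] linear_add[OF linSU] by simp
    also have "\<dots> = TrU (SU (MU up)) + TrV (SV (MV um))" using JS by (metis eq_iff_diff_eq_0)
    also have "\<dots> = f"
    proof -
      have "TrU (SU (MU up)) + TrV (SV (MV um)) = (f + TrU (DU f)) + (f + TrV (DV f))"
        using e1 e2 by (simp add: algebra_simps)
      also have "\<dots> = f + f + (TrU (DU f) + TrV (DV f))" by (simp add: algebra_simps)
      finally show ?thesis using JD by simp
    qed
    finally show ?thesis .
  qed
  have keyB: "MU (DU (- (TrU up + TrV um))) = g"
    if G: "(\<forall>u\<in>KU. u = - DU (TrU u) + SU (MU u))" "(\<forall>u\<in>KV. u = - DV (TrV u) + SV (MV u))"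
     and JD: "(\<forall>f. DU f \<in> KU \<and> DV f \<in> KV \<and> MU (DU f) - MV (DV f) = 0)"
     and JS: "(\<forall>g. SU g \<in> KU \<and> SV g \<in> KV \<and> MU (SU g) + MV (SV g) = g)"
     and P: "LU up = 0" "LV um = 0" "MU up = g" "MV um = g" for up um g
  proof -
    have upK: "up \<in> KU" and umK: "um \<in> KV" using P unfolding KU_def KV_def by auto
    have e1: "g = - MU (DU (TrU up)) + MU (SU g)"
    proof -
      have "MU up = MU (- DU (TrU up) + SU (MU up))" using G(1) upK by metis
      also have "\<dots> = - MU (DU (TrU up)) + MU (SU g)"
        using addl[OF linMU KU_neg[OF conjunct1[OF JD[rule_format]]] conjunct1[OF JS[rule_format]]]
          negl[OF linMU conjunct1[OF JD[rule_format]]] P(3) by simp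
      finally show ?thesis using P(3) by simp
    qed
    have e2: "g = - MV (DV (TrV um)) + MV (SV g)"
    proof -
      have "MV um = MV (- DV (TrV um) + SV (MV um))" using G(2) umK by metis
      also have "\<dots> = - MV (DV (TrV um)) + MV (SV g)"
        using addl[OF linMV KV_neg[OF conjunct1[OF conjunct2[OF JD[rule_format]]]] conjunct1[OF conjunct2[OF JS[rule_format]]]]
          negl[OF linMV conjunct1[OF conjunct2[OF JD[rule_format]]]] P(4) by simp
      finally show ?thesis using P(4) by simp
    qed
    have m2: "MV (DV (TrV um)) = MU (DU (TrV um))" using JD by (metis eq_iff_diff_eq_0)
    have "MU (DU (- (TrU up + TrV um))) = - (MU (DU (TrU up)) + MU (DU (TrV um)))"
      using negl[OF linMU KU_add[OF conjunct1[OF JD[rule_format]] conjunct1[OF JD[rule_format]]]]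
        addl[OF linMU conjunct1[OF JD[rule_format]] conjunct1[OF JD[rule_format]]] linear_add[OF linDU] linear_neg[OF linDU]
      by (metis (no_types) linear_add[OF linDU] linear_neg[OF linDU])
    also have "\<dots> = g"
    proof -
      have "MU (SU g) + MV (SV g) = (g + MU (DU (TrU up))) + (g + MV (DV (TrV um)))"
        using e1 e2 by (simp add: algebra_simps)
      also have "\<dots> = g + g + (MU (DU (TrU up)) + MV (DV (TrV um)))" by (simp add: algebra_simps)
      finally have "g = g + g + (MU (DU (TrU up)) + MV (DV (TrV um)))" using JS by simp
      then have "g + (MU (DU (TrU up)) + MU (DU (TrV um))) = 0" using m2 by (simp add: algebra_simps)
      then show ?thesis by (metis neg_eq_iff_add_eq_0 add.commute)
    qed
    finally show ?thesis .
  qed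
  have bnd: "\<exists>c\<ge>0. \<forall>x\<in>K. Nb (T x) \<le> c * Na x"
    if bb: "bounded_on_set Na Nb K T" "\<And>x. Na x \<ge> 0"
    for Na :: "'a \<Rightarrow> real" and Nb :: "'b \<Rightarrow> real" and K T
  proof -
    obtain c where c: "\<forall>x\<in>K. Nb (T x) \<le> c * Na x" using bb(1) unfolding bounded_on_set_def by blast
    show ?thesis
    proof (intro exI[of _ "max c 0"] conjI ballI)
      fix x assume "x \<in> K"
      then have "Nb (T x) \<le> c * Na x" using c by blast
      also have "\<dots> \<le> max c 0 * Na x" using bb(2)[of x] by (intro mult_right_mono) auto
      finally show "Nb (T x) \<le> max c 0 * Na x" .
    qed simp
  qed
  show ?thesis
  proof (intro conjI impI)
    assume H: "(bounded_on_set nU nN KU MU \<and> bounded_on_set nV nN KV MV)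
     \<and> (\<forall>u\<in>KU. u = - DU (TrU u) + SU (MU u)) \<and> (\<forall>u\<in>KV. u = - DV (TrV u) + SV (MV u))
     \<and> (\<forall>g. SU g \<in> KU \<and> SV g \<in> KV \<and> TrU (SU g) - TrV (SV g) = 0)
     \<and> (\<forall>f. DU f \<in> KU \<and> DV f \<in> KV \<and> TrU (DU f) + TrV (DV f) = - f)
     \<and> (\<forall>f. \<exists>up um. LU up = 0 \<and> LV um = 0 \<and> TrU up = f \<and> TrV um = f)"
    show "\<forall>f. \<exists>g. TrU (SU g) = f"
    proof
      fix f
      obtain up um where "LU up = 0" "LV um = 0" "TrU up = f" "TrV um = f" using H by blast
      then show "\<exists>g. TrU (SU g) = f" using keyA H by blast
    qed
    assume "\<exists>C0. \<forall>f. \<exists>up um. LU up = 0 \<and> LV um = 0 \<and> TrU up = f \<and> TrV um = f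
                      \<and> nU up \<le> C0 * nD f \<and> nV um \<le> C0 * nD f"
    then obtain C0 where C0: "\<forall>f. \<exists>up um. LU up = 0 \<and> LV um = 0 \<and> TrU up = f \<and> TrV um = f
                      \<and> nU up \<le> C0 * nD f \<and> nV um \<le> C0 * nD f" by blast
    obtain cU where cU: "cU \<ge> 0" "\<forall>x\<in>KU. nN (MU x) \<le> cU * nU x" using bnd[of nU nN KU MU] H nUpos by blast
    obtain cV where cV: "cV \<ge> 0" "\<forall>x\<in>KV. nN (MV x) \<le> cV * nV x" using bnd[of nV nN KV MV] H nVpos by blast
    show "\<exists>C1. \<forall>f. \<exists>g. f = TrU (SU g) \<and> nN g \<le> C1 * nD f"
    proof (rule exI, rule allI)
      fix f
      obtain up um where P: "LU up = 0" "LV um = 0" "TrU up = f" "TrV um = f"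
        "nU up \<le> C0 * nD f" "nV um \<le> C0 * nD f" using C0 by blast
      have "nN (MU up + MV um) \<le> KN * (nN (MU up) + nN (MV um))" by (rule KN(2))
      also have "\<dots> \<le> KN * (cU * nU up + cV * nV um)"
        using cU cV P KN(1) unfolding KU_def KV_def
        by (intro mult_left_mono add_mono) auto
      also have "\<dots> \<le> KN * (cU * (C0 * nD f) + cV * (C0 * nD f))"
        using cU cV P KN(1) by (intro mult_left_mono add_mono) auto
      also have "\<dots> = (KN * (cU + cV) * C0) * nD f" by (simp add: algebra_simps)
      finally show "\<exists>g. f = TrU (SU g) \<and> nN g \<le> (KN * (cU + cV) * C0) * nD f"
        using keyA[OF _ _ _ _ P(1-4)] H by metis
    qed
  next
    assume H: "(bounded_on_set nU nD KU TrU \<and> bounded_on_set nV nD KV TrV)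
     \<and> (\<forall>u\<in>KU. u = - DU (TrU u) + SU (MU u)) \<and> (\<forall>u\<in>KV. u = - DV (TrV u) + SV (MV u))
     \<and> (\<forall>f. DU f \<in> KU \<and> DV f \<in> KV \<and> MU (DU f) - MV (DV f) = 0)
     \<and> (\<forall>g. SU g \<in> KU \<and> SV g \<in> KV \<and> MU (SU g) + MV (SV g) = g)
     \<and> (\<forall>g. \<exists>up um. LU up = 0 \<and> LV um = 0 \<and> MU up = g \<and> MV um = g)"
    show "\<forall>g. \<exists>f. MU (DU f) = g"
    proof
      fix g
      obtain up um where "LU up = 0" "LV um = 0" "MU up = g" "MV um = g" using H by blast
      then show "\<exists>f. MU (DU f) = g" using keyB H by blast
    qed
    assume "\<exists>C0. \<forall>g. \<exists>up um. LU up = 0 \<and> LV um = 0 \<and> MU up = g \<and> MV um = g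
                      \<and> nU up \<le> C0 * nN g \<and> nV um \<le> C0 * nN g"
    then obtain C0 where C0: "\<forall>g. \<exists>up um. LU up = 0 \<and> LV um = 0 \<and> MU up = g \<and> MV um = g
                      \<and> nU up \<le> C0 * nN g \<and> nV um \<le> C0 * nN g" by blast
    obtain cU where cU: "cU \<ge> 0" "\<forall>x\<in>KU. nD (TrU x) \<le> cU * nU x" using bnd[of nU nD KU TrU] H nUpos by blast
    obtain cV where cV: "cV \<ge> 0" "\<forall>x\<in>KV. nD (TrV x) \<le> cV * nV x" using bnd[of nV nD KV TrV] H nVpos by blast
    show "\<exists>C1. \<forall>g. \<exists>f. g = MU (DU f) \<and> nD f \<le> C1 * nN g"
    proof (rule exI, rule allI)
      fix g
      obtain up um where P: "LU up = 0" "LV um = 0" "MU up = g" "MV um = g"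
        "nU up \<le> C0 * nN g" "nV um \<le> C0 * nN g" using C0 by blast
      have "nD (- (TrU up + TrV um)) = nD (TrU up + TrV um)" by (rule nDneg)
      also have "\<dots> \<le> KD * (nD (TrU up) + nD (TrV um))" by (rule KD(2))
      also have "\<dots> \<le> KD * (cU * nU up + cV * nV um)"
        using cU cV P KD(1) unfolding KU_def KV_def
        by (intro mult_left_mono add_mono) auto
      also have "\<dots> \<le> KD * (cU * (C0 * nN g) + cV * (C0 * nN g))"
        using cU cV P KD(1) by (intro mult_left_mono add_mono) auto
      also have "\<dots> = (KD * (cU + cV) * C0) * nN g" by (simp add: algebra_simps)
      finally show "\<exists>f. g = MU (DU f) \<and> nD f \<le> (KD * (cU + cV) * C0) * nN g"
        using keyB[OF _ _ _ _ P(1-4)] H by metis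
    qed
  qed
qed

end
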